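(* Let $G$ be a finite simple bipartite graph with bipartition $(X,Y)$ such that no vertex in $X$ is adjacent to every vertex of $Y$. Then $$\sum\left(\frac{|X|d(x)-|Y|d(y)}{(|X|-d(y))(|Y|-d(x))}\;:\; x\in X,\ y\in Y,\ xy\notin E(G)\right)\geq 0.$$
   Context: $d(v)$ denotes the degree of a vertex $v$ in $G$; the sum ranges over all pairs $(x,y)$ with $x\in X$, $y\in Y$ and $x,y$ non-adjacent. *)

theory Defs
  imports Complex_Main
begin

definition bipartite_graph :: "'a set \<Rightarrow> 'a set \<Rightarrow> ('a \<Rightarrow> 'a \<Rightarrow> bool) \<Rightarrow> bool" where
  "bipartite_graph X Y E \<longleftrightarrow>
     finite X \<and> finite Y \<and> X \<inter> Y = {} \<and>
     (\<forall>u v. E u v \<longrightarrow> E v u) \<and>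
     (\<forall>u v. E u v \<longrightarrow> (u \<in> X \<and> v \<in> Y) \<or> (u \<in> Y \<and> v \<in> X))"

definition degree :: "'a set \<Rightarrow> 'a set \<Rightarrow> ('a \<Rightarrow> 'a \<Rightarrow> bool) \<Rightarrow> 'a \<Rightarrow> nat" where
  "degree X Y E v = card {u \<in> X \<union> Y. E v u}"

end

theory Submission
  imports Defs
begin

lemma card_compl_filter:
  assumes "finite A"
  shows "real (card {y\<in>A. \<not> P y}) = real (card A) - real (card {y\<in>A. P y})"
proof -
  have e: "{y\<in>A. \<not> P y} = A - {y\<in>A. P y}" by blast
  have f: "finite {y\<in>A. P y}" using assms by simp
  have s: "{y\<in>A. P y} \<subseteq> A" by blast
  have "card {y\<in>A. P y} \<le> card A" using card_mono[OF assms s] .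
  moreover have "card {y\<in>A. \<not> P y} = card A - card {y\<in>A. P y}"
    unfolding e using card_Diff_subset[OF f s] .
  ultimately show ?thesis by (simp add: of_nat_diff)
qed

theorem proposition6p2:
  fixes X Y :: "'a set" and E :: "'a \<Rightarrow> 'a \<Rightarrow> bool"
  assumes "bipartite_graph X Y E"
    and "\<forall>x\<in>X. \<exists>y\<in>Y. \<not> E x y"
  shows "(\<Sum>(x, y) \<in> {(x, y). x \<in> X \<and> y \<in> Y \<and> \<not> E x y}.
            (real (card X) * real (degree X Y E x) - real (card Y) * real (degree X Y E y))
            / ((real (card X) - real (degree X Y E y)) * (real (card Y) - real (degree X Y E x))))
         \<ge> 0"
proof -
  define m where "m = real (card X)"
  define n where "n = real (card Y)"
  define d where "d = degree X Y E"
  have fX: "finite X" and fY: "finite Y" and disj: "X \<inter> Y = {}"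
    and sym: "\<And>u v. E u v \<Longrightarrow> E v u"
    and bip: "\<And>u v. E u v \<Longrightarrow> (u \<in> X \<and> v \<in> Y) \<or> (u \<in> Y \<and> v \<in> X)"
    using assms(1) unfolding bipartite_graph_def by (meson, meson, meson, meson, meson)
  have dx: "d x = card {y\<in>Y. E x y}" if "x \<in> X" for x
  proof -
    have "{u \<in> X \<union> Y. E x u} = {y\<in>Y. E x y}" using bip disj that by blast
    thus ?thesis unfolding d_def degree_def by simp
  qed
  have dy: "d y = card {x\<in>X. E x y}" if "y \<in> Y" for y
  proof -
    have "{u \<in> X \<union> Y. E y u} = {x\<in>X. E x y}" using bip disj that sym by blast
    thus ?thesis unfolding d_def degree_def by simp
  qed
  have cx: "real (card {y\<in>Y. \<not> E x y}) = n - real (d x)" if "x \<in> X" for x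
    using card_compl_filter[OF fY] dx[OF that] n_def by simp
  have cy: "real (card {x\<in>X. \<not> E x y}) = m - real (d y)" if "y \<in> Y" for y
    using card_compl_filter[OF fX] dy[OF that] m_def by simp
  have cxpos: "n - real (d x) > 0" if "x \<in> X" for x
  proof -
    have "\<exists>y\<in>Y. \<not> E x y" using assms(2) that by (rule bspec)
    then obtain y where "y \<in> Y" "\<not> E x y" by (rule bexE)
    hence ne: "{y\<in>Y. \<not> E x y} \<noteq> {}" by blast
    have "finite {y\<in>Y. \<not> E x y}" using fY by simp
    hence "card {y\<in>Y. \<not> E x y} > 0" using ne card_gt_0_iff by blast
    thus ?thesis using cx[OF that] by linarith
  qed
  let ?f = "\<lambda>x y. (m * real (d x) - n * real (d y)) / ((m - real (d y)) * (n - real (d x)))"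
  have eqf: "?f x y = n / (n - real (d x)) - m / (m - real (d y))"
    if "x \<in> X" "y \<in> Y" "\<not> E x y" for x y
  proof -
    have ne: "{x\<in>X. \<not> E x y} \<noteq> {}" using that by blast
    have "finite {x\<in>X. \<not> E x y}" using fX by simp
    hence "card {x\<in>X. \<not> E x y} > 0" using ne card_gt_0_iff by blast
    hence h1: "m - real (d y) > 0" using cy[OF that(2)] by linarith
    have h2: "n - real (d x) > 0" using cxpos[OF that(1)] .
    show ?thesis using h1 h2 by (simp add: field_simps)
  qed
  have S: "{(x, y). x \<in> X \<and> y \<in> Y \<and> \<not> E x y} = Sigma X (\<lambda>x. {y\<in>Y. \<not> E x y})" by auto
  have A: "(\<Sum>(x, y) \<in> {(x, y). x \<in> X \<and> y \<in> Y \<and> \<not> E x y}. ?f x y)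
      = (\<Sum>x\<in>X. \<Sum>y\<in>{y\<in>Y. \<not> E x y}. ?f x y)"
    unfolding S by (rule sum.Sigma[symmetric]) (use fX fY in auto)
  have B: "(\<Sum>x\<in>X. \<Sum>y\<in>{y\<in>Y. \<not> E x y}. ?f x y) = (\<Sum>x\<in>X. \<Sum>y\<in>{y\<in>Y. \<not> E x y}. n / (n - real (d x)) - m / (m - real (d y)))"
    by (intro sum.cong refl) (auto simp: eqf)
  have C: "(\<Sum>x\<in>X. \<Sum>y\<in>{y\<in>Y. \<not> E x y}. n / (n - real (d x)) - m / (m - real (d y))) = (\<Sum>x\<in>X. \<Sum>y\<in>{y\<in>Y. \<not> E x y}. n / (n - real (d x)))
      - (\<Sum>x\<in>X. \<Sum>y\<in>{y\<in>Y. \<not> E x y}. m / (m - real (d y)))"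
    by (simp only: sum_subtractf)
  have D: "(\<Sum>x\<in>X. \<Sum>y\<in>{y\<in>Y. \<not> E x y}. n / (n - real (d x))) = (\<Sum>x\<in>X. n)"
  proof (intro sum.cong refl)
    fix x assume x: "x \<in> X"
    have "(\<Sum>y\<in>{y\<in>Y. \<not> E x y}. n / (n - real (d x))) = (n - real (d x)) * (n / (n - real (d x)))"
      using cx[OF x] by simp
    also have "\<dots> = n" using cxpos[OF x] by simp
    finally show "(\<Sum>y\<in>{y\<in>Y. \<not> E x y}. n / (n - real (d x))) = n" .
  qed
  have F: "(\<Sum>x\<in>X. \<Sum>y\<in>{y\<in>Y. \<not> E x y}. m / (m - real (d y)))
      = (\<Sum>y\<in>Y. \<Sum>x\<in>{x\<in>X. \<not> E x y}. m / (m - real (d y)))"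
    by (rule sum.swap_restrict[OF fX fY])
  have G: "(\<Sum>y\<in>Y. \<Sum>x\<in>{x\<in>X. \<not> E x y}. m / (m - real (d y))) \<le> (\<Sum>y\<in>Y. m)"
  proof (intro sum_mono)
    fix y assume y: "y \<in> Y"
    have "(\<Sum>x\<in>{x\<in>X. \<not> E x y}. m / (m - real (d y))) = (m - real (d y)) * (m / (m - real (d y)))"
      using cy[OF y] by simp
    also have "\<dots> \<le> m" by (cases "m - real (d y) = 0") auto
    finally show "(\<Sum>x\<in>{x\<in>X. \<not> E x y}. m / (m - real (d y))) \<le> m" .
  qed
  have H: "(\<Sum>x\<in>X. n) - (\<Sum>y\<in>Y. m) = 0" by (simp add: m_def n_def)
  have "(\<Sum>(x, y) \<in> {(x, y). x \<in> X \<and> y \<in> Y \<and> \<not> E x y}. ?f x y) \<ge> 0"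
    using A B C D F G H by linarith
  then show ?thesis unfolding m_def n_def d_def .
qed

end
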